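(* Every Hintikka formula $H$ of $\mathbf{L_1}$ satisfies $\dashv_H H$.
   Context: Formulas of $\mathbf{L_1}$: built from atomic formulas $\epsilon ab$ ($a,b$ name variables from a countably infinite list, possibly equal) with primitive connectives $\vee,\sim$; $\wedge,\supset,\equiv$ defined as usual. Disjunctions may be associated in any way. $\vdash_H A$: $A$ belongs to the smallest set containing all instances of classical propositional tautologies and all formulas $\epsilon ab\supset\epsilon aa$, $(\epsilon ab\wedge\epsilon bc)\supset\epsilon ac$, $(\epsilon ab\wedge\epsilon bb)\supset\epsilon ba$, closed under modus ponens. Positive/negative parts (occurrences): $A$ is a positive part of $A$; if $B\vee C$ is a positive part then $B,C$ are positive parts; if $\sim B$ is a positive part then $B$ is a negative part; if $\sim B$ is a negative part then $B$ is a positive part. $F[B_+,B_-]$ denotes a formula in which some formula $B$ has one occurrence as a positive part and another (non-overlapping) occurrence as a negative part. Hintikka formula: a formula $H$ such that (1) $H$ is not of the form $F[B_+,B_-]$; (2) if $B\vee C$ is a negative part of $H$ then $B$ or $C$ is; (3) if $\epsilon ab$ is a negative part then so is $\epsilon aa$; (4) if $\epsilon ab,\epsilon bc$ are negative parts then so is $\epsilon ac$; (5) if $\epsilon ab,\epsilon bb$ are negative parts then so is $\epsilon ba$. $\mathbf{HAR}$: fix a name variable $a_0$; $\dashv_H$ is the smallest set such that $\dashv_H\epsilon a_0a_0$; $\dashv_H\sim\epsilon a_0a_0$; if $\vdash_H A\supset B$ and $\dashv_H B$ then $\dashv_H A$; if $\dashv_H A$ and $A$ is obtained from $B$ by uniform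 substitution of name variables for name variables then $\dashv_H B$; if $A$ is a Hintikka formula that is a disjunction of atomic or negated atomic formulas, $\dashv_H A$, and $\epsilon ab$ is not a negative part of $A$, then $\dashv_H A\vee\epsilon ab$. *)

theory Defs
  imports Main "HOL-Library.Sublist"
begin

datatype fm = Eps nat nat | Or fm fm | Neg fm

definition And :: "fm \<Rightarrow> fm \<Rightarrow> fm" where
  "And A B = Neg (Or (Neg A) (Neg B))"
definition Imp :: "fm \<Rightarrow> fm \<Rightarrow> fm" where
  "Imp A B = Or (Neg A) B"

fun eval :: "(nat \<Rightarrow> nat \<Rightarrow> bool) \<Rightarrow> fm \<Rightarrow> bool" where
  "eval v (Eps a b) = v a b"
| "eval v (Or A B) = (eval v A \<or> eval v B)"
| "eval v (Neg A) = (\<not> eval v A)"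

text \<open>Instances of classical propositional tautologies.\<close>
definition taut :: "fm \<Rightarrow> bool" where
  "taut A \<longleftrightarrow> (\<forall>v. eval v A)"

inductive provable :: "fm \<Rightarrow> bool" where
  taut: "taut A \<Longrightarrow> provable A"
| ax1: "provable (Imp (Eps a b) (Eps a a))"
| ax2: "provable (Imp (And (Eps a b) (Eps b c)) (Eps a c))"
| ax3: "provable (Imp (And (Eps a b) (Eps b b)) (Eps b a))"
| mp: "provable (Imp A B) \<Longrightarrow> provable A \<Longrightarrow> provable B"

text \<open>part A s p B: the subformula occurrence of B at position p of A is a part
  of A with polarity s (True = positive, False = negative).\<close>
inductive part :: "fm \<Rightarrow> bool \<Rightarrow> nat list \<Rightarrow> fm \<Rightarrow> bool" where
  top: "part A True [] A"
| orL: "part A True p (Or B C) \<Longrightarrow> part A True (p @ [0]) B"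
| orR: "part A True p (Or B C) \<Longrightarrow> part A True (p @ [1]) C"
| neg: "part A s p (Neg B) \<Longrightarrow> part A (\<not> s) (p @ [0]) B"

definition negpart :: "fm \<Rightarrow> fm \<Rightarrow> bool" where
  "negpart A B \<longleftrightarrow> (\<exists>p. part A False p B)"

text \<open>A has the form F[B+,B-]: some B occurs as a positive part and, at a
  non-overlapping occurrence, as a negative part.\<close>
definition has_pos_neg :: "fm \<Rightarrow> bool" where
  "has_pos_neg A \<longleftrightarrow> (\<exists>B p q. part A True p B \<and> part A False q B
      \<and> \<not> prefix p q \<and> \<not> prefix q p)"

definition hintikka :: "fm \<Rightarrow> bool" where
  "hintikka H \<longleftrightarrow>
     \<not> has_pos_neg H
   \<and> (\<forall>B C. negpart H (Or B C) \<longrightarrow> negpart H B \<or> negpart H C)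
   \<and> (\<forall>a b. negpart H (Eps a b) \<longrightarrow> negpart H (Eps a a))
   \<and> (\<forall>a b c. negpart H (Eps a b) \<and> negpart H (Eps b c) \<longrightarrow> negpart H (Eps a c))
   \<and> (\<forall>a b. negpart H (Eps a b) \<and> negpart H (Eps b b) \<longrightarrow> negpart H (Eps b a))"

fun subst :: "(nat \<Rightarrow> nat) \<Rightarrow> fm \<Rightarrow> fm" where
  "subst \<sigma> (Eps a b) = Eps (\<sigma> a) (\<sigma> b)"
| "subst \<sigma> (Or A B) = Or (subst \<sigma> A) (subst \<sigma> B)"
| "subst \<sigma> (Neg A) = Neg (subst \<sigma> A)"

inductive litdisj :: "fm \<Rightarrow> bool" where
  atom: "litdisj (Eps a b)"
| negatom: "litdisj (Neg (Eps a b))"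
| disj: "litdisj A \<Longrightarrow> litdisj B \<Longrightarrow> litdisj (Or A B)"

inductive rejected :: "nat \<Rightarrow> fm \<Rightarrow> bool" for a0 :: nat where
  r1: "rejected a0 (Eps a0 a0)"
| r2: "rejected a0 (Neg (Eps a0 a0))"
| r_mp: "provable (Imp A B) \<Longrightarrow> rejected a0 B \<Longrightarrow> rejected a0 A"
| r_subst: "rejected a0 (subst \<sigma> B) \<Longrightarrow> rejected a0 B"
| r_ext: "hintikka A \<Longrightarrow> litdisj A \<Longrightarrow> rejected a0 A \<Longrightarrow> \<not> negpart A (Eps a b)
            \<Longrightarrow> rejected a0 (Or A (Eps a b))"

end

theory Submission
  imports Defs
begin

lemma eval_Imp[simp]: "eval v (Imp A B) = (\<not> eval v A \<or> eval v B)"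
  by (simp add: Imp_def)

lemma eval_subst: "eval w (subst \<sigma> F) = eval (\<lambda>a b. w (\<sigma> a) (\<sigma> b)) F"
  by (induction F) auto

fun at :: "fm \<Rightarrow> nat list \<Rightarrow> fm option" where
  "at A [] = Some A"
| "at (Or B C) (i#p) = (if i=0 then at B p else if i=1 then at C p else None)"
| "at (Neg B) (i#p) = (if i = 0 then at B p else None)"
| "at (Eps a b) (i#p) = None"

lemma at_append: "at A (p@q) = (case at A p of None \<Rightarrow> None | Some B \<Rightarrow> at B q)"
  by (induction A p rule: at.induct) auto

lemma part_at: "part H s p B \<Longrightarrow> at H p = Some B"
  by (induction rule: part.induct) (auto simp: at_append)

lemma part_nil: "part A s p B \<Longrightarrow> p = [] \<Longrightarrow> s \<and> B = A"
  by (induction rule: part.induct) auto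

lemma part_pol: "part H s p B \<Longrightarrow> part H s' p B' \<Longrightarrow> s = s'"
proof (induction arbitrary: s' B' rule: part.induct)
  case (top A)
  from part_nil[OF top] show ?case by simp
next
  case (orL A p B C)
  have atp: "at A p = Some (Or B C)" using part_at[OF orL.hyps] .
  from orL.prems show ?case
    by (cases rule: part.cases) (auto dest!: part_at simp: atp)
next
  case (orR A p B C)
  have atp: "at A p = Some (Or B C)" using part_at[OF orR.hyps] .
  from orR.prems show ?case
    by (cases rule: part.cases) (auto dest!: part_at simp: atp)
next
  case (neg A s p B)
  have atn: "at A p = Some (Neg B)" using part_at[OF neg.hyps] .
  from neg.prems show ?case
    by (cases rule: part.cases) (use neg.IH in \<open>auto dest: part_at simp: atn\<close>)
qed

fun names :: "fm \<Rightarrow> nat list" where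
  "names (Eps a b) = [a,b]"
| "names (Or A B) = names A @ names B"
| "names (Neg A) = names A"

lemma part_names: "part H s p B \<Longrightarrow> set (names B) \<subseteq> set (names H)"
  by (induction rule: part.induct) auto

lemma eval_agree: "(\<forall>a b. a \<in> S \<longrightarrow> b \<in> S \<longrightarrow> w a b = v a b) \<Longrightarrow> set (names F) \<subseteq> S
   \<Longrightarrow> eval w F = eval v F"
  by (induction F) auto

lemma hintikka_false:
  assumes h: "hintikka H"
  shows "(\<forall>p. part H True p F \<longrightarrow> \<not> eval (\<lambda>a b. negpart H (Eps a b)) F) \<and>
         (\<forall>p. part H False p F \<longrightarrow> eval (\<lambda>a b. negpart H (Eps a b)) F)"
proof (induction F)
  case (Eps a b)
  have "\<not> negpart H (Eps a b)" if pp: "part H True p (Eps a b)" for p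
  proof
    assume "negpart H (Eps a b)"
    then obtain q where q: "part H False q (Eps a b)" by (auto simp: negpart_def)
    from h have "\<not> has_pos_neg H" by (simp add: hintikka_def)
    with pp q have "prefix p q \<or> prefix q p" unfolding has_pos_neg_def by blast
    then have "p = q"
    proof
      assume "prefix p q"
      then obtain r where "q = p @ r" by (auto simp: prefix_def)
      with part_at[OF q] part_at[OF pp] have "at (Eps a b) r = Some (Eps a b)"
        by (simp add: at_append)
      then show "p = q" using \<open>q = p @ r\<close> by (cases r) auto
    next
      assume "prefix q p"
      then obtain r where "p = q @ r" by (auto simp: prefix_def)
      with part_at[OF q] part_at[OF pp] have "at (Eps a b) r = Some (Eps a b)"
        by (simp add: at_append)
      then show "p = q" using \<open>p = q @ r\<close> by (cases r) auto
    qed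
    with part_pol[OF pp] q show False by auto
  qed
  then show ?case by (auto simp: negpart_def)
next
  case (Or B C)
  show ?case
  proof (intro conjI allI impI)
    fix p assume "part H True p (Or B C)"
    then have "part H True (p@[0]) B" "part H True (p@[1]) C"
      using part.orL[of H p B C] part.orR[of H p B C] by auto
    then show "\<not> eval (\<lambda>a b. negpart H (Eps a b)) (Or B C)" using Or.IH by auto
  next
    fix p assume "part H False p (Or B C)"
    then have "negpart H (Or B C)" by (auto simp: negpart_def)
    with h have "negpart H B \<or> negpart H C" by (simp add: hintikka_def)
    then show "eval (\<lambda>a b. negpart H (Eps a b)) (Or B C)" using Or.IH by (auto simp: negpart_def)
  qed
next
  case (Neg B)
  show ?case
  proof (intro conjI allI impI)
    fix p assume "part H True p (Neg B)"
    then have "part H False (p@[0]) B" using part.neg by fastforce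
    then show "\<not> eval (\<lambda>a b. negpart H (Eps a b)) (Neg B)" using Neg.IH by auto
  next
    fix p assume "part H False p (Neg B)"
    then have "part H True (p@[0]) B" using part.neg by fastforce
    then show "eval (\<lambda>a b. negpart H (Eps a b)) (Neg B)" using Neg.IH by auto
  qed
qed

fun plits :: "fm \<Rightarrow> (nat \<times> nat) set" where
  "plits (Eps a b) = {(a,b)}"
| "plits (Or A B) = plits A \<union> plits B"
| "plits (Neg A) = {}"

fun nlits :: "fm \<Rightarrow> (nat \<times> nat) set" where
  "nlits (Eps a b) = {}"
| "nlits (Or A B) = nlits A \<union> nlits B"
| "nlits (Neg A) = (case A of Eps a b \<Rightarrow> {(a,b)} | _ \<Rightarrow> {})"

lemma ld_or: "litdisj (Or B C) \<Longrightarrow> litdisj B \<and> litdisj C"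
  by (cases rule: litdisj.cases) auto

lemma ld_neg: "litdisj (Neg B) \<Longrightarrow> \<exists>a b. B = Eps a b"
  by (cases rule: litdisj.cases) auto

lemma ld_part: "part X s p B \<Longrightarrow> litdisj X \<Longrightarrow>
  (s \<and> litdisj B \<and> plits B \<subseteq> plits X \<and> nlits B \<subseteq> nlits X) \<or>
  (\<not> s \<and> (\<exists>a b. B = Eps a b \<and> (a,b) \<in> nlits X))"
proof (induction rule: part.induct)
  case (top A) then show ?case by auto
next
  case (orL A p B C)
  then show ?case using orL.IH[OF orL.prems] by (auto dest!: ld_or)
next
  case (orR A p B C)
  then show ?case using orR.IH[OF orR.prems] by (auto dest!: ld_or)
next
  case (neg A s p B)
  then show ?case using neg.IH[OF neg.prems] by (auto dest!: ld_neg)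
qed

lemma ld_negpart_intro: "litdisj A \<Longrightarrow> part X True p A \<Longrightarrow> (a,b) \<in> nlits A \<Longrightarrow> negpart X (Eps a b)"
proof (induction arbitrary: p rule: litdisj.induct)
  case (atom a b) then show ?case by simp
next
  case (negatom c d)
  then show ?case using part.neg[OF negatom(1)] by (auto simp: negpart_def)
next
  case (disj A B)
  then show ?case by (auto intro: part.intros)
qed

lemma ld_negpart: "litdisj X \<Longrightarrow> negpart X (Eps a b) \<longleftrightarrow> (a,b) \<in> nlits X"
  using ld_part ld_negpart_intro[OF _ part.top] by (fastforce simp: negpart_def)

lemma ld_negpart_eps: "litdisj X \<Longrightarrow> negpart X B \<Longrightarrow> \<exists>a b. B = Eps a b"
  using ld_part by (fastforce simp: negpart_def)

lemma ld_hintikka: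
  assumes ld: "litdisj A" and disj: "nlits A \<inter> plits A = {}"
    and c3: "\<And>a b. (a,b) \<in> nlits A \<Longrightarrow> (a,a) \<in> nlits A"
    and c4: "\<And>a b c. (a,b) \<in> nlits A \<Longrightarrow> (b,c) \<in> nlits A \<Longrightarrow> (a,c) \<in> nlits A"
    and c5: "\<And>a b. (a,b) \<in> nlits A \<Longrightarrow> (b,b) \<in> nlits A \<Longrightarrow> (b,a) \<in> nlits A"
  shows "hintikka A"
proof -
  have "\<not> has_pos_neg A"
  proof
    assume "has_pos_neg A"
    then obtain B p q where p: "part A True p B" and q: "part A False q B"
      unfolding has_pos_neg_def by blast
    from ld_part[OF q ld] obtain a b where "B = Eps a b" "(a,b) \<in> nlits A" by auto
    moreover from ld_part[OF p ld] this have "(a,b) \<in> plits A" by auto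
    ultimately show False using disj by auto
  qed
  moreover have "\<not> negpart A (Or B C)" for B C using ld_negpart_eps[OF ld] by blast
  ultimately show ?thesis unfolding hintikka_def using ld_negpart[OF ld] c3 c4 c5 by blast
qed

fun nd :: "(nat \<times> nat) list \<Rightarrow> fm" where
  "nd [] = Neg (Eps 0 0)"
| "nd [x] = Neg (Eps (fst x) (snd x))"
| "nd (x#y#xs) = Or (Neg (Eps (fst x) (snd x))) (nd (y#xs))"

lemma nd_props: "xs \<noteq> [] \<Longrightarrow> litdisj (nd xs) \<and> nlits (nd xs) = set xs \<and> plits (nd xs) = {}
   \<and> (\<forall>w. eval w (nd xs) = (\<exists>x\<in>set xs. \<not> w (fst x) (snd x)))"
  by (induction xs rule: nd.induct) (auto intro: litdisj.intros)

fun ext :: "fm \<Rightarrow> (nat \<times> nat) list \<Rightarrow> fm" where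
  "ext A [] = A"
| "ext A (x#xs) = ext (Or A (Eps (fst x) (snd x))) xs"

lemma ext_eval: "eval w (ext A xs) = (eval w A \<or> (\<exists>x\<in>set xs. w (fst x) (snd x)))"
  by (induction A xs rule: ext.induct) auto

lemma ext_rej:
  assumes "litdisj A" "rejected a0 A" "nlits A = N" "plits A \<subseteq> P" "N \<inter> P = {}"
    "set xs \<subseteq> P"
    and c3: "\<And>a b. (a,b) \<in> N \<Longrightarrow> (a,a) \<in> N"
    and c4: "\<And>a b c. (a,b) \<in> N \<Longrightarrow> (b,c) \<in> N \<Longrightarrow> (a,c) \<in> N"
    and c5: "\<And>a b. (a,b) \<in> N \<Longrightarrow> (b,b) \<in> N \<Longrightarrow> (b,a) \<in> N"
  shows "rejected a0 (ext A xs)"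
  using assms(1-6)
proof (induction A xs rule: ext.induct)
  case (1 A) then show ?case by simp
next
  case (2 A x xs)
  obtain a b where x: "x = (a,b)" by force
  have eqN: "nlits A = N" using 2 by simp
  have h: "hintikka A"
  proof (rule ld_hintikka[OF 2(2)])
    show "nlits A \<inter> plits A = {}" unfolding eqN using 2(5,6) by blast
    show "\<And>a b. (a, b) \<in> nlits A \<Longrightarrow> (a, a) \<in> nlits A" unfolding eqN by (fact c3)
    show "\<And>a b c. (a, b) \<in> nlits A \<Longrightarrow> (b, c) \<in> nlits A \<Longrightarrow> (a, c) \<in> nlits A"
      unfolding eqN by (fact c4)
    show "\<And>a b. (a, b) \<in> nlits A \<Longrightarrow> (b, b) \<in> nlits A \<Longrightarrow> (b, a) \<in> nlits A"
      unfolding eqN by (fact c5)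
  qed
  have "(a,b) \<notin> N" using 2 x by auto
  then have "\<not> negpart A (Eps a b)" using ld_negpart[OF \<open>litdisj A\<close>] 2 by auto
  then have "rejected a0 (Or A (Eps a b))" using rejected.r_ext h 2 by blast
  moreover have "litdisj (Or A (Eps a b))" using 2 by (auto intro: litdisj.intros)
  ultimately show ?case using 2 x by simp
qed

lemma ext_ld: "litdisj A \<Longrightarrow> litdisj (ext A xs)"
  by (induction A xs rule: ext.induct) (auto intro: litdisj.intros)

lemma rej_taut: "taut (Imp A B) \<Longrightarrow> rejected a0 B \<Longrightarrow> rejected a0 A"
  by (rule rejected.r_mp[OF provable.taut])

theorem theorem3p1:
  fixes a0 :: nat and H :: fm
  assumes "hintikka H"
  shows "rejected a0 H"
proof -
  define v where "v = (\<lambda>a b. negpart H (Eps a b))"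
  have hv: "\<not> eval v H" using hintikka_false[OF assms, of H] part.top unfolding v_def by blast
  define \<sigma> :: "nat \<Rightarrow> nat" where "\<sigma> = (\<lambda>_. a0)"
  show ?thesis
  proof (cases "\<exists>a b. v a b")
    case False
    have "taut (Imp (subst \<sigma> H) (Eps a0 a0))"
      unfolding taut_def
    proof
      fix w
      show "eval w (Imp (subst \<sigma> H) (Eps a0 a0))"
      proof (cases "w a0 a0")
        case False
        have "(\<lambda>a b. w (\<sigma> a) (\<sigma> b)) = v" using False \<open>\<not>(\<exists>a b. v a b)\<close> by (auto simp: \<sigma>_def)
        then show ?thesis using hv by (simp add: eval_subst)
      qed simp
    qed
    then have "rejected a0 (subst \<sigma> H)" using rej_taut rejected.r1 by blast
    then show ?thesis by (rule rejected.r_subst)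
  next
    case True
    then obtain a1 b1 where ab1: "v a1 b1" by blast
    define ns where "ns = names H"
    define ps where "ps = List.product ns ns"
    define negs where "negs = filter (\<lambda>x. v (fst x) (snd x)) ps"
    define poss where "poss = filter (\<lambda>x. \<not> v (fst x) (snd x)) ps"
    have vnames: "v a b \<Longrightarrow> a \<in> set ns \<and> b \<in> set ns" for a b
      using part_names unfolding v_def negpart_def ns_def by fastforce
    have setnegs: "set negs = {(a,b). v a b}"
      unfolding negs_def ps_def set_filter set_product using vnames by auto
    have "negs \<noteq> []" using setnegs ab1 by auto
    note nd = nd_props[OF this]
    have "taut (Imp (subst \<sigma> (nd negs)) (Neg (Eps a0 a0)))"
      using nd \<open>negs \<noteq> []\<close> by (auto simp: taut_def eval_subst \<sigma>_def)
    then have "rejected a0 (subst \<sigma> (nd negs))" using rej_taut rejected.r2 by blast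
    then have r0: "rejected a0 (nd negs)" by (rule rejected.r_subst)
    define N where "N = {(a,b). v a b}"
    have hn: "negpart H (Eps a b) = v a b" for a b by (simp add: v_def)
    have "rejected a0 (ext (nd negs) poss)"
    proof (rule ext_rej[where N = N and P = "set poss"])
      show "nlits (nd negs) = N" using nd setnegs N_def by simp
      show "N \<inter> set poss = {}" by (auto simp: N_def poss_def)
      show "\<And>a b. (a,b) \<in> N \<Longrightarrow> (a,a) \<in> N"
        using assms unfolding hintikka_def N_def hn by blast
      show "\<And>a b c. (a,b) \<in> N \<Longrightarrow> (b,c) \<in> N \<Longrightarrow> (a,c) \<in> N"
        using assms unfolding hintikka_def N_def hn by blast
      show "\<And>a b. (a,b) \<in> N \<Longrightarrow> (b,b) \<in> N \<Longrightarrow> (b,a) \<in> N"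
        using assms unfolding hintikka_def N_def hn by blast
    qed (use nd r0 in auto)
    moreover have "taut (Imp H (ext (nd negs) poss))"
      unfolding taut_def
    proof
      fix w
      show "eval w (Imp H (ext (nd negs) poss))"
      proof (cases "eval w (ext (nd negs) poss)")
        case False
        then have F1: "\<forall>x\<in>set negs. w (fst x) (snd x)" and F2: "\<forall>x\<in>set poss. \<not> w (fst x) (snd x)"
          using nd unfolding ext_eval by auto
        have agree: "\<forall>a b. a \<in> set ns \<longrightarrow> b \<in> set ns \<longrightarrow> w a b = v a b"
        proof (intro allI impI)
          fix a b assume "a \<in> set ns" "b \<in> set ns"
          then have "(a,b) \<in> set ps" unfolding ps_def set_product by simp
          then show "w a b = v a b"
          proof (cases "v a b")
            case True
            then have "(a,b) \<in> set negs" using \<open>(a,b) \<in> set ps\<close> unfolding negs_def by simp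
            then show ?thesis using F1 True by fastforce
          next
            case False
            then have "(a,b) \<in> set poss" using \<open>(a,b) \<in> set ps\<close> unfolding poss_def by simp
            then show ?thesis using F2 False by fastforce
          qed
        qed
        have "eval w H = eval v H" by (rule eval_agree[OF agree]) (simp add: ns_def)
        then show ?thesis using hv by simp
      qed simp
    qed
    ultimately show ?thesis using rej_taut by blast
  qed
qed

end
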